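(* Let $q$ be a power of a prime $p$ and let $X\subset\mathbb{P}^n$ be a Frobenius nonclassical hypersurface over $\mathbb{F}_q$ of degree $d\not\equiv 0\pmod p$. Then $X$ meets every line $L\subset\mathbb{P}^n$ defined over $\mathbb{F}_q$ in at least one $\mathbb{F}_q$-point.
   Context: A hypersurface $X=\{F=0\}$ over $\mathbb{F}_q$ is Frobenius nonclassical if $F$ divides $\sum_{i=0}^n x_i^q\frac{\partial F}{\partial x_i}$. *)

theory Defs
  imports Main "HOL-Library.Poly_Mapping"
begin

text \<open>Multivariate polynomials over 'k in variables x_i (i :: nat), as finitely
supported maps from exponent vectors exponent vectors to coefficients.
The poly_mapping library provides the ring structure (convolution product).\<close>

type_synonym 'k mpoly = "(nat \<Rightarrow>\<^sub>0 nat) \<Rightarrow>\<^sub>0 'k"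

definition mvar :: "nat \<Rightarrow> 'k::comm_ring_1 mpoly" where
  "mvar i = Poly_Mapping.single (Poly_Mapping.single i 1) 1"

definition mdeg :: "(nat \<Rightarrow>\<^sub>0 nat) \<Rightarrow> nat" where
  "mdeg m = (\<Sum>i\<in>Poly_Mapping.keys m. Poly_Mapping.lookup m i)"

definition in_vars :: "nat \<Rightarrow> 'k::zero mpoly \<Rightarrow> bool" where
  "in_vars n F \<longleftrightarrow> (\<forall>m\<in>Poly_Mapping.keys F. Poly_Mapping.keys m \<subseteq> {..n})"

definition homogeneous :: "nat \<Rightarrow> 'k::zero mpoly \<Rightarrow> bool" where
  "homogeneous d F \<longleftrightarrow> (\<forall>m\<in>Poly_Mapping.keys F. mdeg m = d)"

definition meval :: "'k::comm_ring_1 mpoly \<Rightarrow> (nat \<Rightarrow> 'k) \<Rightarrow> 'k" where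
  "meval F x = (\<Sum>m\<in>Poly_Mapping.keys F.
      Poly_Mapping.lookup F m * (\<Prod>i\<in>Poly_Mapping.keys m. x i ^ Poly_Mapping.lookup m i))"

definition mpderiv :: "nat \<Rightarrow> 'k::comm_ring_1 mpoly \<Rightarrow> 'k mpoly" where
  "mpderiv i F = (\<Sum>m\<in>Poly_Mapping.keys F.
      Poly_Mapping.single (m - Poly_Mapping.single i 1)
        (of_nat (Poly_Mapping.lookup m i) * Poly_Mapping.lookup F m))"

text \<open>Frobenius nonclassical (over F_q, q = |'k|): F divides sum_i x_i^q dF/dx_i.\<close>
definition frobenius_nonclassical :: "nat \<Rightarrow> 'k::{finite,comm_ring_1} mpoly \<Rightarrow> bool" where
  "frobenius_nonclassical n F \<longleftrightarrow>
     F dvd (\<Sum>i\<le>n. mvar i ^ card (UNIV :: 'k set) * mpderiv i F)"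

end

theory Submission
  imports Defs "HOL-Computational_Algebra.Polynomial_Factorial"
begin


definition mmono :: "(nat \<Rightarrow>\<^sub>0 nat) \<Rightarrow> (nat \<Rightarrow> 'r::comm_ring_1) \<Rightarrow> 'r" where
  "mmono m x = (\<Prod>i\<in>Poly_Mapping.keys m. x i ^ Poly_Mapping.lookup m i)"

definition evalh :: "('k::zero \<Rightarrow> 'r::comm_ring_1) \<Rightarrow> 'k mpoly \<Rightarrow> (nat \<Rightarrow> 'r) \<Rightarrow> 'r" where
  "evalh \<phi> F x = (\<Sum>m\<in>Poly_Mapping.keys F. \<phi> (Poly_Mapping.lookup F m) * mmono m x)"

definition rhom :: "('k::comm_ring_1 \<Rightarrow> 'r::comm_ring_1) \<Rightarrow> bool" where
  "rhom \<phi> \<longleftrightarrow> (\<forall>a b. \<phi> (a + b) = \<phi> a + \<phi> b) \<and> (\<forall>a b. \<phi> (a * b) = \<phi> a * \<phi> b) \<and> \<phi> 0 = 0 \<and> \<phi> 1 = 1"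

lemma meval_evalh: "meval F x = evalh (\<lambda>c. c) F x"
  by (simp add: meval_def evalh_def mmono_def)

lemma mmono_superset:
  assumes "finite S" "Poly_Mapping.keys m \<subseteq> S"
  shows "mmono m x = (\<Prod>i\<in>S. x i ^ Poly_Mapping.lookup m i)"
  unfolding mmono_def
  by (rule prod.mono_neutral_left) (use assms in \<open>auto simp: in_keys_iff\<close>)

lemma mmono_add: "mmono (m + m') x = mmono m x * mmono m' x"
proof -
  let ?S = "Poly_Mapping.keys m \<union> Poly_Mapping.keys m'"
  have "mmono (m + m') x = (\<Prod>i\<in>?S. x i ^ Poly_Mapping.lookup (m + m') i)"
    by (rule mmono_superset) (use keys_add[of m m'] in auto)
  also have "\<dots> = (\<Prod>i\<in>?S. x i ^ Poly_Mapping.lookup m i) * (\<Prod>i\<in>?S. x i ^ Poly_Mapping.lookup m' i)"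
    by (simp add: lookup_add power_add prod.distrib)
  also have "\<dots> = mmono m x * mmono m' x"
    by (simp add: mmono_superset[of ?S m] mmono_superset[of ?S m'])
  finally show ?thesis .
qed

lemma mmono_zero [simp]: "mmono 0 x = 1"
  by (simp add: mmono_def)

lemma evalh_superset:
  assumes "\<phi> 0 = 0" "finite S" "Poly_Mapping.keys F \<subseteq> S"
  shows "evalh \<phi> F x = (\<Sum>m\<in>S. \<phi> (Poly_Mapping.lookup F m) * mmono m x)"
  unfolding evalh_def
  by (rule sum.mono_neutral_left) (use assms in \<open>auto simp: in_keys_iff\<close>)

lemma evalh_add:
  assumes "rhom \<phi>"
  shows "evalh \<phi> (F + G) x = evalh \<phi> F x + evalh \<phi> G x"
proof -
  let ?S = "Poly_Mapping.keys F \<union> Poly_Mapping.keys G"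
  have z: "\<phi> 0 = 0" using assms by (simp add: rhom_def)
  have a: "\<And>a b. \<phi> (a + b) = \<phi> a + \<phi> b" using assms by (simp add: rhom_def)
  have "evalh \<phi> (F + G) x = (\<Sum>m\<in>?S. \<phi> (Poly_Mapping.lookup (F + G) m) * mmono m x)"
    by (rule evalh_superset[where \<phi>=\<phi>, OF z]) (use keys_add[of F G] in auto)
  also have "\<dots> = (\<Sum>m\<in>?S. \<phi> (Poly_Mapping.lookup F m) * mmono m x) + (\<Sum>m\<in>?S. \<phi> (Poly_Mapping.lookup G m) * mmono m x)"
    by (simp add: lookup_add a distrib_right sum.distrib)
  also have "\<dots> = evalh \<phi> F x + evalh \<phi> G x"
    by (simp add: evalh_superset[where \<phi>=\<phi>, OF z, of ?S F] evalh_superset[where \<phi>=\<phi>, OF z, of ?S G])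
  finally show ?thesis .
qed

lemma evalh_zero [simp]: "evalh \<phi> 0 x = 0"
  by (simp add: evalh_def)

lemma evalh_sum:
  assumes "rhom \<phi>"
  shows "evalh \<phi> (\<Sum>j\<in>A. G j) x = (\<Sum>j\<in>A. evalh \<phi> (G j) x)"
  by (induction A rule: infinite_finite_induct) (auto simp: evalh_add[OF assms])

lemma evalh_single:
  assumes "rhom \<phi>"
  shows "evalh \<phi> (Poly_Mapping.single m c) x = \<phi> c * mmono m x"
  using assms by (auto simp: evalh_def rhom_def)

lemma pm_decomp: "F = (\<Sum>m\<in>Poly_Mapping.keys F. Poly_Mapping.single m (Poly_Mapping.lookup F m))"
proof (rule poly_mapping_eqI)
  fix k
  show "Poly_Mapping.lookup F k = Poly_Mapping.lookup (\<Sum>m\<in>Poly_Mapping.keys F. Poly_Mapping.single m (Poly_Mapping.lookup F m)) k"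
    by (simp add: lookup_sum lookup_single when_def in_keys_iff)
qed

lemma evalh_mult:
  assumes "rhom \<phi>"
  shows "evalh \<phi> (F * G) x = evalh \<phi> F x * evalh \<phi> G x"
proof -
  have m: "\<And>a b. \<phi> (a * b) = \<phi> a * \<phi> b" using assms by (simp add: rhom_def)
  let ?F = "\<lambda>m. Poly_Mapping.single m (Poly_Mapping.lookup F m)"
  let ?G = "\<lambda>m. Poly_Mapping.single m (Poly_Mapping.lookup G m)"
  have "F * G = (\<Sum>m\<in>Poly_Mapping.keys F. ?F m) * (\<Sum>m'\<in>Poly_Mapping.keys G. ?G m')"
    by (subst pm_decomp[of F], subst pm_decomp[of G]) (rule refl)
  also have "\<dots> = (\<Sum>m\<in>Poly_Mapping.keys F. \<Sum>m'\<in>Poly_Mapping.keys G. ?F m * ?G m')"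
    by (simp add: sum_product)
  finally have "evalh \<phi> (F * G) x = (\<Sum>m\<in>Poly_Mapping.keys F. \<Sum>m'\<in>Poly_Mapping.keys G. evalh \<phi> (?F m * ?G m') x)"
    by (simp add: evalh_sum[OF assms])
  also have "\<dots> = (\<Sum>m\<in>Poly_Mapping.keys F. \<Sum>m'\<in>Poly_Mapping.keys G. (\<phi> (Poly_Mapping.lookup F m) * mmono m x) * (\<phi> (Poly_Mapping.lookup G m') * mmono m' x))"
    by (simp add: mult_single evalh_single[OF assms] m mmono_add mult_ac)
  also have "\<dots> = evalh \<phi> F x * evalh \<phi> G x"
    by (simp add: evalh_def sum_product)
  finally show ?thesis .
qed

lemma evalh_one:
  assumes "rhom \<phi>"
  shows "evalh \<phi> 1 x = 1"
  using assms by (simp add: evalh_def rhom_def)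

lemma evalh_power:
  assumes "rhom \<phi>"
  shows "evalh \<phi> (F ^ k) x = evalh \<phi> F x ^ k"
  by (induction k) (simp_all add: evalh_one[OF assms] evalh_mult[OF assms])

lemma evalh_mvar:
  assumes "rhom \<phi>"
  shows "evalh \<phi> (mvar i) x = x i"
  using assms by (simp add: mvar_def evalh_single rhom_def mmono_def)


lemma rhom_of_nat:
  assumes "rhom \<phi>"
  shows "\<phi> (of_nat k) = of_nat k"
  using assms by (induction k) (simp_all add: rhom_def)

lemma evalh_mpderiv:
  assumes "rhom \<phi>"
  shows "evalh \<phi> (mpderiv i F) x = (\<Sum>m\<in>Poly_Mapping.keys F.
     of_nat (Poly_Mapping.lookup m i) * \<phi> (Poly_Mapping.lookup F m) * mmono (m - Poly_Mapping.single i 1) x)"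
  unfolding mpderiv_def
  using assms by (simp add: evalh_sum evalh_single rhom_of_nat rhom_def)

lemma keys_minus_single: "Poly_Mapping.keys (m - Poly_Mapping.single i (1::nat)) \<subseteq> Poly_Mapping.keys m"
  by (auto simp: in_keys_iff lookup_minus)

lemma lookup_minus_single_same: "Poly_Mapping.lookup (m - Poly_Mapping.single i (1::nat)) i = Poly_Mapping.lookup m i - 1"
  by (simp add: lookup_minus)

lemma lookup_minus_single_other: "j \<noteq> i \<Longrightarrow> Poly_Mapping.lookup (m - Poly_Mapping.single i (1::nat)) j = Poly_Mapping.lookup m j"
  by (simp add: lookup_minus lookup_single)

lemma mmono_minus_single:
  assumes "Poly_Mapping.lookup m i > 0"
  shows "x i * mmono (m - Poly_Mapping.single i 1) x = mmono m x"
proof -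
  let ?S = "Poly_Mapping.keys m"
  let ?m' = "m - Poly_Mapping.single i 1"
  have iS: "i \<in> ?S" using assms by (simp add: in_keys_iff)
  have fS: "finite ?S" by simp
  obtain k where k: "Poly_Mapping.lookup m i = Suc k" using assms by (cases "Poly_Mapping.lookup m i") auto
  have "mmono ?m' x = (\<Prod>j\<in>?S. x j ^ Poly_Mapping.lookup ?m' j)"
    by (rule mmono_superset[OF fS keys_minus_single])
  also have "\<dots> = x i ^ Poly_Mapping.lookup ?m' i * (\<Prod>j\<in>?S - {i}. x j ^ Poly_Mapping.lookup ?m' j)"
    by (rule prod.remove[OF fS iS])
  also have "(\<Prod>j\<in>?S - {i}. x j ^ Poly_Mapping.lookup ?m' j) = (\<Prod>j\<in>?S - {i}. x j ^ Poly_Mapping.lookup m j)"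
    by (rule prod.cong) (auto simp: lookup_minus_single_other lookup_minus_single_other[simplified])
  finally have 1: "mmono ?m' x = x i ^ k * (\<Prod>j\<in>?S - {i}. x j ^ Poly_Mapping.lookup m j)"
    by (simp add: lookup_minus_single_same lookup_minus_single_same[simplified] k)
  have 2: "mmono m x = x i ^ Suc k * (\<Prod>j\<in>?S - {i}. x j ^ Poly_Mapping.lookup m j)"
    unfolding mmono_def using prod.remove[OF fS iS, of "\<lambda>j. x j ^ Poly_Mapping.lookup m j"] k by simp
  show ?thesis using 1 2 by (simp add: mult.assoc)
qed

lemma mdeg_superset:
  assumes "finite S" "Poly_Mapping.keys m \<subseteq> S"
  shows "mdeg m = (\<Sum>i\<in>S. Poly_Mapping.lookup m i)"
  unfolding mdeg_def
  by (rule sum.mono_neutral_left) (use assms in \<open>auto simp: in_keys_iff\<close>)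

lemma euler:
  assumes "rhom \<phi>" "in_vars n F" "homogeneous d F"
  shows "(\<Sum>i\<le>n. x i * evalh \<phi> (mpderiv i F) x) = of_nat d * evalh \<phi> F x"
proof -
  have "(\<Sum>i\<le>n. x i * evalh \<phi> (mpderiv i F) x) =
     (\<Sum>i\<le>n. \<Sum>m\<in>Poly_Mapping.keys F. x i * (of_nat (Poly_Mapping.lookup m i) * \<phi> (Poly_Mapping.lookup F m) * mmono (m - Poly_Mapping.single i 1) x))"
    by (simp add: evalh_mpderiv[OF assms(1)] sum_distrib_left)
  also have "\<dots> = (\<Sum>m\<in>Poly_Mapping.keys F. \<Sum>i\<le>n. x i * (of_nat (Poly_Mapping.lookup m i) * \<phi> (Poly_Mapping.lookup F m) * mmono (m - Poly_Mapping.single i 1) x))"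
    by (rule sum.swap)
  also have "\<dots> = (\<Sum>m\<in>Poly_Mapping.keys F. \<Sum>i\<le>n. of_nat (Poly_Mapping.lookup m i) * (\<phi> (Poly_Mapping.lookup F m) * mmono m x))"
  proof (intro sum.cong refl)
    fix m i
    show "x i * (of_nat (Poly_Mapping.lookup m i) * \<phi> (Poly_Mapping.lookup F m) * mmono (m - Poly_Mapping.single i 1) x) =
          of_nat (Poly_Mapping.lookup m i) * (\<phi> (Poly_Mapping.lookup F m) * mmono m x)"
    proof (cases "Poly_Mapping.lookup m i > 0")
      case True
      have e: "x i * mmono (m - Poly_Mapping.single i 1) x = mmono m x" by (rule mmono_minus_single[OF True])
      have "x i * (of_nat (Poly_Mapping.lookup m i) * \<phi> (Poly_Mapping.lookup F m) * mmono (m - Poly_Mapping.single i 1) x)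
         = of_nat (Poly_Mapping.lookup m i) * (\<phi> (Poly_Mapping.lookup F m) * (x i * mmono (m - Poly_Mapping.single i 1) x))"
        by (simp only: mult.assoc mult.left_commute)
      then show ?thesis by (simp only: e)
    qed simp
  qed
  also have "\<dots> = (\<Sum>m\<in>Poly_Mapping.keys F. of_nat d * (\<phi> (Poly_Mapping.lookup F m) * mmono m x))"
  proof (intro sum.cong refl)
    fix m assume m: "m \<in> Poly_Mapping.keys F"
    have "mdeg m = (\<Sum>i\<le>n. Poly_Mapping.lookup m i)"
      by (rule mdeg_superset) (use assms(2) m in \<open>auto simp: in_vars_def\<close>)
    moreover have "mdeg m = d" using assms(3) m by (simp add: homogeneous_def)
    ultimately show "(\<Sum>i\<le>n. of_nat (Poly_Mapping.lookup m i) * (\<phi> (Poly_Mapping.lookup F m) * mmono m x)) =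
       of_nat d * (\<phi> (Poly_Mapping.lookup F m) * mmono m x)"
      by (simp add: sum_distrib_right[symmetric])
  qed
  also have "\<dots> = of_nat d * evalh \<phi> F x"
    by (simp add: evalh_def sum_distrib_left)
  finally show ?thesis .
qed

lemma homogeneous_mpderiv:
  assumes "homogeneous d F"
  shows "homogeneous (d - 1) (mpderiv i F)"
  unfolding homogeneous_def
proof
  fix m' assume "m' \<in> Poly_Mapping.keys (mpderiv i F)"
  hence "m' \<in> (\<Union>m\<in>Poly_Mapping.keys F. Poly_Mapping.keys (Poly_Mapping.single (m - Poly_Mapping.single i 1)
        (of_nat (Poly_Mapping.lookup m i) * Poly_Mapping.lookup F m)))"
    unfolding mpderiv_def by (rule subsetD[OF keys_sum])
  then obtain m where m: "m \<in> Poly_Mapping.keys F"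
    and m': "m' \<in> Poly_Mapping.keys (Poly_Mapping.single (m - Poly_Mapping.single i 1)
        (of_nat (Poly_Mapping.lookup m i) * Poly_Mapping.lookup F m))"
    by (rule UN_E)
  have c: "of_nat (Poly_Mapping.lookup m i) * Poly_Mapping.lookup F m \<noteq> 0"
    using m' by (cases "of_nat (Poly_Mapping.lookup m i) * Poly_Mapping.lookup F m = 0") simp_all
  with m' have eq: "m' = m - Poly_Mapping.single i 1" by simp
  from c have "Poly_Mapping.lookup m i \<noteq> 0" by (cases "Poly_Mapping.lookup m i = 0") simp_all
  then obtain k where k: "Poly_Mapping.lookup m i = Suc k" by (cases "Poly_Mapping.lookup m i") auto
  have iS: "i \<in> Poly_Mapping.keys m" using k by (simp add: in_keys_iff)
  have fS: "finite (Poly_Mapping.keys m)" by simp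
  have "mdeg m' = (\<Sum>j\<in>Poly_Mapping.keys m. Poly_Mapping.lookup m' j)"
    unfolding eq by (rule mdeg_superset[OF fS keys_minus_single])
  also have "\<dots> = Poly_Mapping.lookup m' i + (\<Sum>j\<in>Poly_Mapping.keys m - {i}. Poly_Mapping.lookup m' j)"
    by (rule sum.remove[OF fS iS])
  also have "(\<Sum>j\<in>Poly_Mapping.keys m - {i}. Poly_Mapping.lookup m' j) = (\<Sum>j\<in>Poly_Mapping.keys m - {i}. Poly_Mapping.lookup m j)"
    unfolding eq by (rule sum.cong) (auto simp: lookup_minus_single_other lookup_minus_single_other[simplified])
  also have "Poly_Mapping.lookup m' i = k"
    unfolding eq using k by (simp add: lookup_minus_single_same lookup_minus_single_same[simplified])
  finally have 1: "mdeg m' = k + (\<Sum>j\<in>Poly_Mapping.keys m - {i}. Poly_Mapping.lookup m j)" .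
  have 2: "mdeg m = Suc k + (\<Sum>j\<in>Poly_Mapping.keys m - {i}. Poly_Mapping.lookup m j)"
    unfolding mdeg_def using sum.remove[OF fS iS, of "Poly_Mapping.lookup m"] k by simp
  have "mdeg m = d" using assms m by (simp add: homogeneous_def)
  with 1 2 show "mdeg m' = d - 1" by simp
qed



lemma coeff_mult_bound:
  fixes p q :: "'a::comm_ring_1 poly"
  assumes "degree p \<le> a" "degree q \<le> b"
  shows "coeff (p * q) (a + b) = coeff p a * coeff q b"
proof (cases "degree p = a \<and> degree q = b")
  case True thus ?thesis using coeff_mult_degree_sum[of p q] by simp
next
  case False
  then have lt: "degree p + degree q < a + b" using assms by linarith
  then have "coeff (p * q) (a + b) = 0" using degree_mult_le[of p q] by (intro coeff_eq_0) linarith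
  moreover have "coeff p a * coeff q b = 0"
  proof (cases "degree p = a")
    case True
    with False assms have "degree q < b" by simp
    then show ?thesis by (simp add: coeff_eq_0)
  next
    case False
    with assms have "degree p < a" by simp
    then show ?thesis by (simp add: coeff_eq_0)
  qed
  ultimately show ?thesis by simp
qed

lemma prod_bound:
  fixes g :: "'b \<Rightarrow> 'a::comm_ring_1 poly"
  assumes "finite S" "\<And>i. i \<in> S \<Longrightarrow> degree (g i) \<le> a i"
  shows "degree (\<Prod>i\<in>S. g i) \<le> (\<Sum>i\<in>S. a i) \<and> coeff (\<Prod>i\<in>S. g i) (\<Sum>i\<in>S. a i) = (\<Prod>i\<in>S. coeff (g i) (a i))"
  using assms
proof (induction S rule: finite_induct)
  case empty
  then show ?case by simp
next
  case (insert x S)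
  then have IH: "degree (\<Prod>i\<in>S. g i) \<le> (\<Sum>i\<in>S. a i)" "coeff (\<Prod>i\<in>S. g i) (\<Sum>i\<in>S. a i) = (\<Prod>i\<in>S. coeff (g i) (a i))"
    by auto
  have gx: "degree (g x) \<le> a x" using insert by simp
  have "degree (g x * (\<Prod>i\<in>S. g i)) \<le> a x + (\<Sum>i\<in>S. a i)"
    using degree_mult_le[of "g x" "\<Prod>i\<in>S. g i"] gx IH(1) by linarith
  moreover have "coeff (g x * (\<Prod>i\<in>S. g i)) (a x + (\<Sum>i\<in>S. a i)) = coeff (g x) (a x) * (\<Prod>i\<in>S. coeff (g i) (a i))"
    using coeff_mult_bound[OF gx IH(1)] IH(2) by simp
  ultimately show ?case using insert by simp
qed

lemma pow_bound:
  fixes p :: "'a::comm_ring_1 poly"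
  assumes "degree p \<le> a"
  shows "degree (p ^ k) \<le> a * k \<and> coeff (p ^ k) (a * k) = coeff p a ^ k"
proof (induction k)
  case 0
  then show ?case by simp
next
  case (Suc k)
  have "degree (p * p ^ k) \<le> a + a * k"
    using degree_mult_le[of p "p ^ k"] assms Suc by linarith
  moreover have "coeff (p * p ^ k) (a + a * k) = coeff p a * coeff p a ^ k"
    using coeff_mult_bound[OF assms, of "p ^ k" "a * k"] Suc by simp
  ultimately show ?case by simp
qed

lemma mmono_P:
  fixes u v :: "nat \<Rightarrow> 'a::comm_ring_1"
  shows "degree (mmono m (\<lambda>i. [:u i, v i:])) \<le> mdeg m \<and>
         coeff (mmono m (\<lambda>i. [:u i, v i:])) (mdeg m) = mmono m v"
proof -
  have "\<And>i. degree ([:u i, v i:] ^ Poly_Mapping.lookup m i) \<le> Poly_Mapping.lookup m i \<and>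
     coeff ([:u i, v i:] ^ Poly_Mapping.lookup m i) (Poly_Mapping.lookup m i) = v i ^ Poly_Mapping.lookup m i"
    using pow_bound[of "[:u i, v i:]" 1 "Poly_Mapping.lookup m i" for i] by simp
  then show ?thesis
    using prod_bound[of "Poly_Mapping.keys m" "\<lambda>i. [:u i, v i:] ^ Poly_Mapping.lookup m i" "Poly_Mapping.lookup m"]
    by (simp add: mmono_def mdeg_def)
qed

lemma rhom_const: "rhom (\<lambda>c::'a::comm_ring_1. [:c:])"
  by (simp add: rhom_def one_pCons)

lemma rhom_id: "rhom (\<lambda>c::'a::comm_ring_1. c)"
  by (simp add: rhom_def)

lemma evalP_bound:
  fixes u v :: "nat \<Rightarrow> 'a::comm_ring_1"
  assumes "homogeneous e H"
  shows "degree (evalh (\<lambda>c. [:c:]) H (\<lambda>i. [:u i, v i:])) \<le> e \<and>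
         coeff (evalh (\<lambda>c. [:c:]) H (\<lambda>i. [:u i, v i:])) e = meval H v"
proof -
  have hm: "\<And>m. m \<in> Poly_Mapping.keys H \<Longrightarrow> mdeg m = e" using assms by (simp add: homogeneous_def)
  have "degree (evalh (\<lambda>c. [:c:]) H (\<lambda>i. [:u i, v i:])) \<le> e"
    unfolding evalh_def
  proof (rule degree_sum_le)
    fix m assume m: "m \<in> Poly_Mapping.keys H"
    have "degree ([:Poly_Mapping.lookup H m:] * mmono m (\<lambda>i. [:u i, v i:])) \<le> degree (mmono m (\<lambda>i. [:u i, v i:]))"
      by (simp add: degree_smult_le)
    also have "\<dots> \<le> e" using mmono_P[of m u v] hm[OF m] by simp
    finally show "degree ([:Poly_Mapping.lookup H m:] * mmono m (\<lambda>i. [:u i, v i:])) \<le> e" .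
  qed simp
  moreover have "coeff (evalh (\<lambda>c. [:c:]) H (\<lambda>i. [:u i, v i:])) e = meval H v"
    unfolding evalh_def meval_def coeff_sum
  proof (rule sum.cong[OF refl])
    fix m assume m: "m \<in> Poly_Mapping.keys H"
    have "coeff (mmono m (\<lambda>i. [:u i, v i:])) e = mmono m v" using mmono_P[of m u v] hm[OF m] by simp
    then show "coeff ([:Poly_Mapping.lookup H m:] * mmono m (\<lambda>i. [:u i, v i:])) e =
       Poly_Mapping.lookup H m * (\<Prod>i\<in>Poly_Mapping.keys m. v i ^ Poly_Mapping.lookup m i)"
      by (simp add: mmono_def)
  qed
  ultimately show ?thesis by simp
qed

lemma poly_evalh:
  fixes P :: "nat \<Rightarrow> 'a::comm_ring_1 poly"
  shows "poly (evalh (\<lambda>c. [:c:]) H P) c = meval H (\<lambda>i. poly (P i) c)"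
  by (simp add: evalh_def meval_def mmono_def poly_sum poly_prod)



lemma ff_pow_card:
  fixes x :: "'a :: {finite,field}"
  shows "x ^ card (UNIV :: 'a set) = x"
proof (cases "x = 0")
  case False
  have "x * (\<Prod>y\<in>UNIV-{0}. x * y) = x * x ^ (card (UNIV :: 'a set) - 1) * \<Prod>(UNIV-{0})"
    by (simp add: prod.distrib mult_ac)
  also have "x * x ^ (card (UNIV :: 'a set) - 1) = x ^ Suc (card (UNIV :: 'a set) - 1)"
    by (subst power_Suc) auto
  also have "Suc (card (UNIV :: 'a set) - 1) = card (UNIV :: 'a set)"
    using finite_UNIV_card_ge_0[where ?'a = 'a] by simp
  also have "(\<Prod>y\<in>UNIV-{0}. x * y) = (\<Prod>y\<in>UNIV-{0}. y)"
    by (rule prod.reindex_bij_witness[of _ "\<lambda>y. y / x" "\<lambda>y. x * y"]) (use False in auto)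
  finally show ?thesis
    by simp
qed (use finite_UNIV_card_ge_0[where ?'a = 'a] in auto)

lemma card_ge2: "card (UNIV :: 'a :: {finite,field} set) \<ge> 2"
proof -
  have "card {0, 1 :: 'a} \<le> card (UNIV :: 'a set)" by (rule card_mono) auto
  then show ?thesis by simp
qed

lemma binom_vanish:
  assumes "0 < j" "j < card (UNIV :: 'a :: {finite,field} set)"
  shows "of_nat (card (UNIV :: 'a set) choose j) = (0 :: 'a)"
proof -
  let ?q = "card (UNIV :: 'a set)"
  have q2: "?q \<ge> 2" by (rule card_ge2)
  define p :: "'a poly" where "p = (\<Sum>l\<in>{1..<?q}. monom (of_nat (?q choose l)) l)"
  have "poly p x = 0" for x :: 'a
  proof -
    have pp: "poly p x = (\<Sum>l\<in>{1..<?q}. of_nat (?q choose l) * x ^ l)"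
      by (simp add: p_def poly_sum poly_monom)
    have "(x + 1) ^ ?q = (\<Sum>l\<le>?q. of_nat (?q choose l) * x ^ l * 1 ^ (?q - l))"
      by (rule binomial_ring)
    also have "{..?q} = insert 0 (insert ?q {1..<?q})" using q2 by auto
    also have "(\<Sum>l\<in>insert 0 (insert ?q {1..<?q}). of_nat (?q choose l) * x ^ l * 1 ^ (?q - l))
       = 1 + (x ^ ?q + (\<Sum>l\<in>{1..<?q}. of_nat (?q choose l) * x ^ l))"
      using q2 by (simp add: sum.insert)
    finally have "(x + 1) ^ ?q = 1 + (x ^ ?q + poly p x)" using pp by simp
    then show ?thesis by (simp add: ff_pow_card)
  qed
  moreover have "degree p < ?q"
  proof -
    have "degree p \<le> ?q - 1" unfolding p_def
      by (rule degree_sum_le) (auto intro: order.trans[OF degree_monom_le])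
    then show ?thesis using q2 by linarith
  qed
  ultimately have "p = 0"
    using poly_eqI_degree[of UNIV p 0] by simp
  hence "coeff p j = 0" by simp
  moreover have "coeff p j = of_nat (?q choose j)"
    using assms by (simp add: p_def coeff_sum coeff_monom)
  ultimately show ?thesis by simp
qed

lemma frob:
  fixes a b :: "'a :: {finite,field} poly"
  shows "(a + b) ^ card (UNIV :: 'a set) = a ^ card (UNIV :: 'a set) + b ^ card (UNIV :: 'a set)"
proof -
  let ?q = "card (UNIV :: 'a set)"
  have q2: "?q \<ge> 2" by (rule card_ge2)
  have "(a + b) ^ ?q = (\<Sum>l\<le>?q. of_nat (?q choose l) * a ^ l * b ^ (?q - l))"
    by (rule binomial_ring)
  also have "\<dots> = (\<Sum>l\<in>{0, ?q}. of_nat (?q choose l) * a ^ l * b ^ (?q - l))"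
  proof (intro sum.mono_neutral_right ballI)
    fix l assume "l \<in> {..?q} - {0, ?q}"
    hence l: "0 < l" "l < ?q" by auto
    have "(of_nat (?q choose l) :: 'a poly) = [:of_nat (?q choose l):]" by (rule of_nat_poly)
    also have "\<dots> = 0" using binom_vanish[OF l] by simp
    finally show "of_nat (?q choose l) * a ^ l * b ^ (?q - l) = 0" by simp
  qed auto
  finally show ?thesis using q2 by (simp add: add_ac)
qed

lemma const_pow: "[:c:] ^ k = [:c ^ k:]"
  by (induction k) (simp_all add: one_pCons algebra_simps)

lemma lin_prod:
  "[:0, 1:] ^ card (UNIV :: 'a set) - [:0, 1:] = (\<Prod>c\<in>(UNIV :: 'a :: {finite,field} set). [:- c, 1:])"
proof -
  let ?q = "card (UNIV :: 'a set)"
  have q2: "?q \<ge> 2" by (rule card_ge2)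
  have Xq: "[:0, 1:] ^ ?q = (monom 1 ?q :: 'a poly)" by (simp add: monom_altdef)
  have d1: "degree ([:0, 1:] ^ ?q - [:0, 1::'a:]) \<le> ?q"
    using degree_diff_le_max[of "[:0, 1::'a:] ^ ?q" "[:0, 1:]"] q2 by (simp add: Xq degree_monom_eq)
  have c1: "coeff ([:0, 1:] ^ ?q - [:0, 1::'a:]) ?q = 1"
    using q2 by (simp add: Xq coeff_eq_0)
  have nz: "\<forall>c\<in>(UNIV :: 'a set). [:- c, 1:] \<noteq> 0" by simp
  have d2: "degree (\<Prod>c\<in>(UNIV :: 'a set). [:- c, 1:]) = ?q"
    using degree_prod_eq_sum_degree[OF nz] by simp
  have c2: "coeff (\<Prod>c\<in>(UNIV :: 'a set). [:- c, 1:]) ?q = 1"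
    using lead_coeff_prod[of "\<lambda>c. [:- c, 1:]" "UNIV :: 'a set"] d2 by simp
  show ?thesis
  proof (rule poly_eqI_degree_lead_coeff[where n = ?q and A = UNIV])
    fix z :: 'a
    have "poly (\<Prod>c\<in>(UNIV :: 'a set). [:- c, 1:]) z = (\<Prod>c\<in>(UNIV :: 'a set). z - c)"
      by (simp add: poly_prod)
    also have "\<dots> = 0" by (rule prod_zero) auto
    finally show "poly ([:0, 1:] ^ ?q - [:0, 1:]) z = poly (\<Prod>c\<in>(UNIV :: 'a set). [:- c, 1:]) z"
      by (simp add: ff_pow_card)
  qed (simp_all only: c1 c2 d1 d2 order.refl)
qed

lemma prime_cancel:
  fixes f L Y :: "'a :: field poly"
  assumes "f dvd L * Y" "prime_elem L" "\<not> L dvd f"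
  shows "f dvd Y"
proof -
  obtain g where g: "L * Y = f * g" using assms(1) by (elim dvdE)
  have "L dvd f * g" unfolding g[symmetric] by simp
  hence "L dvd f \<or> L dvd g" using prime_elem_dvd_mult_iff[OF assms(2)] by simp
  hence "L dvd g" using assms(3) by simp
  then obtain h where h: "g = L * h" by (elim dvdE)
  have "L * Y = L * (f * h)" using g h by (simp add: mult_ac)
  moreover have "L \<noteq> 0" using assms(2) by auto
  ultimately have "Y = f * h" by simp
  then show ?thesis by simp
qed

lemma prod_cancel:
  fixes f Y :: "'a :: field poly"
  assumes "finite S" "f dvd (\<Prod>c\<in>S. L c) * Y" "\<And>c. c \<in> S \<Longrightarrow> prime_elem (L c) \<and> \<not> L c dvd f"
  shows "f dvd Y"
  using assms
proof (induction S arbitrary: Y rule: finite_induct)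
  case empty
  then show ?case by simp
next
  case (insert x S)
  have e: "(\<Prod>c\<in>insert x S. L c) * Y = L x * ((\<Prod>c\<in>S. L c) * Y)"
    using insert.hyps by (simp add: mult.assoc)
  have "f dvd L x * ((\<Prod>c\<in>S. L c) * Y)" using insert.prems(1) unfolding e .
  hence "f dvd (\<Prod>c\<in>S. L c) * Y" by (rule prime_cancel) (use insert.prems(2)[of x] in simp_all)
  then show ?case by (rule insert.IH) (use insert.prems(2) in simp)
qed

lemma noroot_cancel:
  fixes f :: "'a :: {finite,field} poly"
  assumes "\<And>c. poly f c \<noteq> 0" "f dvd ([:0, 1:] ^ card (UNIV :: 'a set) - [:0, 1:]) * Y"
  shows "f dvd Y"
proof (rule prod_cancel[of UNIV])
  show "f dvd (\<Prod>c\<in>UNIV. [:- c, 1:]) * Y" using assms(2) by (simp add: lin_prod)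
  fix c :: 'a
  have "prime_elem [:- c, 1:]" by (rule prime_elem_linear_field_poly) simp
  moreover have "\<not> [:- c, 1:] dvd f" using assms(1)[of c] by (simp add: poly_eq_0_iff_dvd)
  ultimately show "prime_elem [:- c, 1:] \<and> \<not> [:- c, 1:] dvd f" by simp
qed simp



theorem corollary2p3:
  fixes F :: "'k::{finite,field} mpoly" and n d :: nat and u v :: "nat \<Rightarrow> 'k"
  assumes "F \<noteq> 0" and "in_vars n F" and "homogeneous d F"
    and "frobenius_nonclassical n F"
    and "\<not> CHAR('k) dvd d"
    and indep: "\<forall>a b :: 'k. (\<forall>i\<le>n. a * u i + b * v i = 0) \<longrightarrow> a = 0 \<and> b = 0"
  shows "\<exists>a b :: 'k. (a \<noteq> 0 \<or> b \<noteq> 0) \<and> meval F (\<lambda>i. a * u i + b * v i) = 0"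
proof (rule ccontr)
  assume neg: "\<not> ?thesis"
  let ?q = "card (UNIV :: 'k set)"
  define C where "C = (\<lambda>c::'k. [:c:])"
  define P where "P = (\<lambda>i. [:u i, v i:])"
  define X where "X = [:0, 1::'k:]"
  have rC: "rhom C" unfolding C_def by (rule rhom_const)
  define f where "f = evalh C F P"
  define D where "D = (\<lambda>i. evalh C (mpderiv i F) P)"
  define A where "A = (\<Sum>i\<le>n. [:u i:] * D i)"
  define B where "B = (\<Sum>i\<le>n. [:v i:] * D i)"
  have PX: "P i = [:u i:] + X * [:v i:]" for i
    by (simp add: P_def X_def)
  have eul: "A + X * B = of_nat d * f"
  proof -
    have "(\<Sum>i\<le>n. P i * D i) = of_nat d * f"
      unfolding D_def f_def by (rule euler[OF rC assms(2,3)])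
    moreover have "(\<Sum>i\<le>n. P i * D i) = A + X * B"
      unfolding PX A_def B_def by (simp add: distrib_right sum.distrib sum_distrib_left mult.assoc)
    ultimately show ?thesis by simp
  qed
  have Pq: "P i ^ ?q = [:u i:] + X ^ ?q * [:v i:]" for i
    unfolding PX frob power_mult_distrib const_pow ff_pow_card ..
  have G: "evalh C (\<Sum>i\<le>n. mvar i ^ ?q * mpderiv i F) P = A + X ^ ?q * B"
  proof -
    have "evalh C (\<Sum>i\<le>n. mvar i ^ ?q * mpderiv i F) P = (\<Sum>i\<le>n. P i ^ ?q * D i)"
      unfolding D_def by (simp add: evalh_sum[OF rC] evalh_mult[OF rC] evalh_power[OF rC] evalh_mvar[OF rC])
    also have "\<dots> = A + X ^ ?q * B"
      unfolding Pq A_def B_def by (simp add: distrib_right sum.distrib sum_distrib_left mult.assoc)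
    finally show ?thesis .
  qed
  obtain H where H: "(\<Sum>i\<le>n. mvar i ^ ?q * mpderiv i F) = F * H"
    using assms(4) unfolding frobenius_nonclassical_def by (elim dvdE)
  have fG: "A + X ^ ?q * B = f * evalh C H P"
    using G unfolding H f_def by (simp add: evalh_mult[OF rC])
  have fdvd: "f dvd (X ^ ?q - X) * B"
  proof -
    have "(X ^ ?q - X) * B = (A + X ^ ?q * B) - (A + X * B)" by (simp add: algebra_simps)
    also have "\<dots> = f * (evalh C H P - of_nat d)" unfolding fG eul by (simp add: algebra_simps)
    finally show ?thesis by simp
  qed
  have nn: "meval F (\<lambda>i. a * u i + b * v i) \<noteq> 0" if "a \<noteq> 0 \<or> b \<noteq> 0" for a b
    using neg that by blast
  have v0: "meval F v \<noteq> 0"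
    using nn[of 0 1] by simp
  have noroot: "poly f c \<noteq> 0" for c
  proof
    assume "poly f c = 0"
    moreover have "poly f c = meval F (\<lambda>i. 1 * u i + c * v i)"
      unfolding f_def C_def poly_evalh by (simp add: P_def mult.commute)
    ultimately show False using nn[of 1 c] by simp
  qed
  have fb: "degree f \<le> d \<and> coeff f d = meval F v"
    unfolding f_def C_def P_def by (rule evalP_bound[OF assms(3)])
  have d0: "d > 0"
  proof (rule ccontr)
    assume "\<not> d > 0" hence "d = 0" by simp
    then show False using assms(5) by simp
  qed
  have degf: "degree f = d"
  proof -
    have "d \<le> degree f" using fb v0 by (intro le_degree) simp
    then show ?thesis using fb by linarith
  qed
  have "f dvd B"
    using noroot fdvd unfolding X_def by (rule noroot_cancel)
  have Db: "degree (D i) \<le> d - 1 \<and> coeff (D i) (d - 1) = meval (mpderiv i F) v" for i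
    unfolding D_def C_def P_def by (rule evalP_bound[OF homogeneous_mpderiv[OF assms(3)]])
  have degB: "degree B \<le> d - 1"
    unfolding B_def
  proof (rule degree_sum_le)
    fix i
    show "degree ([:v i:] * D i) \<le> d - 1"
      using Db[of i] degree_smult_le[of "v i" "D i"] by simp
  qed simp
  have "coeff B (d - 1) = (\<Sum>i\<le>n. v i * meval (mpderiv i F) v)"
    unfolding B_def coeff_sum using Db by simp
  also have "\<dots> = of_nat d * meval F v"
    unfolding meval_evalh by (rule euler[OF rhom_id assms(2,3)])
  finally have cB: "coeff B (d - 1) = of_nat d * meval F v" .
  have "of_nat d \<noteq> (0::'k)" using assms(5) by (simp add: of_nat_eq_0_iff_char_dvd)
  hence "coeff B (d - 1) \<noteq> 0" using cB v0 by simp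
  hence "B \<noteq> 0" by auto
  hence "degree f \<le> degree B" using \<open>f dvd B\<close> by (rule dvd_imp_degree_le[rotated])
  then show False using degf degB d0 by linarith
qed

end
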